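(* Let $\Sigma$ be a closed oriented surface, $\mathbb T=\mathfrak t/\Lambda$ a compact torus and $K$ a nondegenerate symmetric bilinear form as below. For Lagrangians $L_1,L_2,L_3\subset H^1(\Sigma;\mathbb R)$ let $\mu_\Sigma(L_1,L_2,L_3)$ be their Maslov–Kashiwara index for the cup-product form $\omega_\Sigma$, and define $\mu_K(L_1,L_2,L_3):=\mu(\mathcal P_{L_1},\mathcal P_{L_2},\mathcal P_{L_3})$, the Maslov–Kashiwara index in $(H^1(\Sigma;\mathfrak t),\omega_{\Sigma,K})$ of $\mathcal P_{L_i}=L_i\otimes\mathfrak t$. Then $\mu_K(L_1,L_2,L_3)=\sigma(K)\,\mu_\Sigma(L_1,L_2,L_3)$, where $\sigma(K)$ is the signature of the real bilinear form $K$ on $\mathfrak t$.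
   Context: $K:\Lambda\times\Lambda\to\mathbb Z$ is even, integral, nondegenerate and symmetric, extended to $\mathfrak t$. $\omega_{\Sigma,K}([\alpha],[\beta])=\int_\Sigma K(\alpha\wedge\beta)$. For Lagrangians $V_1,V_2,V_3$ of a symplectic vector space $(V,\omega)$, the Maslov–Kashiwara index $\mu(V_1,V_2,V_3)$ is the signature of the quadratic form $Q(x_1,x_2,x_3)=\omega(x_1,x_2)+\omega(x_2,x_3)+\omega(x_3,x_1)$ on $V_1\oplus V_2\oplus V_3$. *)

theory Defs
  imports "HOL-Analysis.Analysis"
begin

definition pos_index :: "('a::real_vector \<Rightarrow> real) \<Rightarrow> 'a set \<Rightarrow> nat" where
  "pos_index q S = Max {dim U | U. subspace U \<and> U \<subseteq> S \<and> (\<forall>x\<in>U. x \<noteq> 0 \<longrightarrow> q x > 0)}"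

definition neg_index :: "('a::real_vector \<Rightarrow> real) \<Rightarrow> 'a set \<Rightarrow> nat" where
  "neg_index q S = Max {dim U | U. subspace U \<and> U \<subseteq> S \<and> (\<forall>x\<in>U. x \<noteq> 0 \<longrightarrow> q x < 0)}"

definition signature :: "('a::real_vector \<Rightarrow> real) \<Rightarrow> 'a set \<Rightarrow> int" where
  "signature q S = int (pos_index q S) - int (neg_index q S)"

definition symplectic_on :: "'a::real_vector set \<Rightarrow> ('a \<Rightarrow> 'a \<Rightarrow> real) \<Rightarrow> bool" where
  "symplectic_on V \<omega> \<longleftrightarrow> subspace V \<and> bilinear \<omega> \<and> (\<forall>x\<in>V. \<omega> x x = 0) \<and>
     (\<forall>x\<in>V. (\<forall>y\<in>V. \<omega> x y = 0) \<longrightarrow> x = 0)"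

definition lagrangian :: "'a::real_vector set \<Rightarrow> ('a \<Rightarrow> 'a \<Rightarrow> real) \<Rightarrow> 'a set \<Rightarrow> bool" where
  "lagrangian V \<omega> L \<longleftrightarrow> subspace L \<and> L \<subseteq> V \<and> L = {x\<in>V. \<forall>y\<in>L. \<omega> x y = 0}"

definition maslov_kashiwara :: "('a::real_vector \<Rightarrow> 'a \<Rightarrow> real) \<Rightarrow> 'a set \<Rightarrow> 'a set \<Rightarrow> 'a set \<Rightarrow> int" where
  "maslov_kashiwara \<omega> V1 V2 V3 =
     signature (\<lambda>(x1, x2, x3). \<omega> x1 x2 + \<omega> x2 x3 + \<omega> x3 x1) (V1 \<times> V2 \<times> V3)"

text \<open>Tensor products with t = real^'n, realised as real^('m \<times> 'n).\<close>

definition tprod :: "real^'m \<Rightarrow> real^'n \<Rightarrow> real^('m \<times> 'n)" where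
  "tprod a t = (\<chi> p. a $ fst p * t $ snd p)"

definition tensor_t :: "(real^'m) set \<Rightarrow> (real^('m \<times> 'n::finite)) set" where
  "tensor_t L = span {tprod a (t :: real^'n) | a t. a \<in> L}"

text \<open>omega_{Sigma,K}: the bilinear form with omega_K(a (x) s, b (x) t) = omega(a,b) K(s,t).\<close>

definition omega_K :: "(real^'m \<Rightarrow> real^'m \<Rightarrow> real) \<Rightarrow> (real^'n \<Rightarrow> real^'n \<Rightarrow> real)
    \<Rightarrow> real^('m \<times> 'n) \<Rightarrow> real^('m \<times> 'n) \<Rightarrow> real" where
  "omega_K \<omega> K x y = (\<Sum>p\<in>UNIV. \<Sum>q\<in>UNIV.
     \<omega> (axis (fst p) 1) (axis (fst q) 1) * K (axis (snd p) 1) (axis (snd q) 1) * x $ p * y $ q)"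

text \<open>The lattice Lambda, in coordinates where Lambda = Z^n inside t = R^n.\<close>

definition lattice_pt :: "real^'n \<Rightarrow> bool" where
  "lattice_pt x \<longleftrightarrow> (\<forall>i. x $ i \<in> \<int>)"

definition even_integral_form :: "(real^'n \<Rightarrow> real^'n \<Rightarrow> real) \<Rightarrow> bool" where
  "even_integral_form K \<longleftrightarrow> bilinear K \<and> (\<forall>x y. K x y = K y x) \<and>
     (\<forall>x. (\<forall>y. K x y = 0) \<longrightarrow> x = 0) \<and>
     (\<forall>x y. lattice_pt x \<longrightarrow> lattice_pt y \<longrightarrow> K x y \<in> \<int>) \<and>
     (\<forall>x. lattice_pt x \<longrightarrow> (\<exists>k::int. K x x = 2 * of_int k))"

end

theory Submission
  imports Defs
begin

definition obasis :: "('a::euclidean_space \<Rightarrow> 'a \<Rightarrow> real) \<Rightarrow> 'a set \<Rightarrow> 'i set \<Rightarrow> ('i \<Rightarrow> 'a) \<Rightarrow> bool" where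
 "obasis b S I f \<longleftrightarrow> finite I \<and> f ` I \<subseteq> S \<and> (\<forall>c. (\<Sum>i\<in>I. c i *\<^sub>R f i) = 0 \<longrightarrow> (\<forall>i\<in>I. c i = 0))
    \<and> S \<subseteq> span (f ` I) \<and> (\<forall>i\<in>I. \<forall>j\<in>I. i \<noteq> j \<longrightarrow> b (f i) (f j) = 0)"

lemma indep_inj:
  fixes f :: "'i \<Rightarrow> 'a::euclidean_space"
  assumes fin: "finite I" and ind: "\<forall>c. (\<Sum>i\<in>I. c i *\<^sub>R f i) = 0 \<longrightarrow> (\<forall>i\<in>I. c i = 0)"
  shows "inj_on f I" "independent (f ` I)"
proof -
  show inj: "inj_on f I"
  proof (rule inj_onI, rule ccontr)
    fix i j assume ij: "i \<in> I" "j \<in> I" "f i = f j" "i \<noteq> j"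
    define c where "c = (\<lambda>k. if k = i then 1 else if k = j then -1 else (0::real))"
    have "(\<Sum>k\<in>I. c k *\<^sub>R f k) = (\<Sum>k\<in>{i,j}. c k *\<^sub>R f k)"
      by (rule sum.mono_neutral_right) (use fin ij in \<open>auto simp: c_def\<close>)
    also have "\<dots> = 0" using ij by (simp add: c_def)
    finally have "c i = 0" using ind ij by blast
    then show False by (simp add: c_def)
  qed
  show "independent (f ` I)"
    unfolding dependent_finite[OF finite_imageI[OF fin]]
  proof clarsimp
    fix u i assume i: "i \<in> I" "u (f i) \<noteq> 0" and s: "(\<Sum>v\<in>f ` I. u v *\<^sub>R v) = 0"
    have "(\<Sum>k\<in>I. u (f k) *\<^sub>R f k) = 0" using s by (simp add: sum.reindex[OF inj])
    then show False using ind[rule_format, of "\<lambda>k. u (f k)"] i by blast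
  qed
qed

lemma span_img:
  fixes f :: "'i \<Rightarrow> 'a::euclidean_space"
  assumes "finite P" "inj_on f P" "x \<in> span (f ` P)"
  shows "\<exists>c. x = (\<Sum>i\<in>P. c i *\<^sub>R f i)"
proof -
  obtain u where "x = (\<Sum>v\<in>f ` P. u v *\<^sub>R v)" using assms span_finite[of "f ` P"] by auto
  then have "x = (\<Sum>i\<in>P. u (f i) *\<^sub>R f i)" by (simp add: sum.reindex[OF assms(2)])
  then show ?thesis by (rule exI[of _ "\<lambda>i. u (f i)"])
qed

lemma quad_sum:
  fixes f :: "'i \<Rightarrow> 'a::euclidean_space"
  assumes b: "bilinear b" and fin: "finite A"
    and orth: "\<forall>i\<in>A. \<forall>j\<in>A. i \<noteq> j \<longrightarrow> b (f i) (f j) = 0"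
  shows "b (\<Sum>i\<in>A. c i *\<^sub>R f i) (\<Sum>i\<in>A. c i *\<^sub>R f i) = (\<Sum>i\<in>A. (c i)^2 * b (f i) (f i))"
proof -
  have "b (\<Sum>i\<in>A. c i *\<^sub>R f i) (\<Sum>i\<in>A. c i *\<^sub>R f i) = (\<Sum>(i,j)\<in>A\<times>A. b (c i *\<^sub>R f i) (c j *\<^sub>R f j))"
    by (rule bilinear_sum[OF b])
  also have "\<dots> = (\<Sum>i\<in>A. \<Sum>j\<in>A. c i * c j * b (f i) (f j))"
    by (simp add: sum.cartesian_product bilinear_lmul[OF b] bilinear_rmul[OF b] mult_ac)
  also have "\<dots> = (\<Sum>i\<in>A. \<Sum>j\<in>A. if j = i then c i * c j * b (f i) (f j) else 0)"
    by (rule sum.cong[OF refl], rule sum.cong[OF refl]) (use orth in auto)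
  also have "\<dots> = (\<Sum>i\<in>A. (c i)^2 * b (f i) (f i))"
    using fin by (simp add: power2_eq_square)
  finally show ?thesis .
qed

lemma pos_set_finite:
  fixes S :: "'a::euclidean_space set"
  shows "finite {dim U | U. subspace U \<and> U \<subseteq> S \<and> P U}"
proof -
  have "{dim U | U. subspace U \<and> U \<subseteq> S \<and> P U} \<subseteq> {..dim S}"
    by (auto intro: dim_subset)
  then show ?thesis using finite_subset by blast
qed

lemma sylvester_pos:
  fixes f :: "'i \<Rightarrow> 'a::euclidean_space"
  assumes ob: "obasis b S I f" and S: "subspace S" and b: "bilinear b"
  shows "pos_index (\<lambda>x. b x x) S = card {i\<in>I. b (f i) (f i) > 0}"
proof -
  define P where "P = {i\<in>I. b (f i) (f i) > 0}"
  define N where "N = {i\<in>I. \<not> b (f i) (f i) > 0}"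
  have fin: "finite I" and fI: "f ` I \<subseteq> S"
    and ind: "\<forall>c. (\<Sum>i\<in>I. c i *\<^sub>R f i) = 0 \<longrightarrow> (\<forall>i\<in>I. c i = 0)"
    and sp: "S \<subseteq> span (f ` I)" and orth: "\<forall>i\<in>I. \<forall>j\<in>I. i \<noteq> j \<longrightarrow> b (f i) (f j) = 0"
    using ob unfolding obasis_def by auto
  have inj: "inj_on f I" and indep: "independent (f ` I)" using indep_inj[OF fin ind] by auto
  have SI: "S = span (f ` I)" using sp fI S by (simp add: span_minimal subset_antisym)
  have dimS: "dim S = card I" using SI dim_span_eq_card_independent[OF indep] card_image[OF inj] by simp
  have finP: "finite P" "finite N" using fin by (auto simp: P_def N_def)
  have indA: "independent (f ` A)" if "A \<subseteq> I" for A
    using indep that by (meson image_mono independent_mono)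
  have injA: "inj_on f A" if "A \<subseteq> I" for A using inj that inj_on_subset by blast
  have cardA: "dim (span (f ` A)) = card A" if "A \<subseteq> I" for A
    using dim_span_eq_card_independent[OF indA[OF that]] card_image[OF injA[OF that]] by simp
  have zero: "c i = 0" if "A \<subseteq> I" "(\<Sum>i\<in>A. c i *\<^sub>R f i) = 0" "i \<in> A" for A c i
  proof -
    let ?d = "\<lambda>k. if k \<in> A then c k else 0"
    have "(\<Sum>k\<in>A. ?d k *\<^sub>R f k) = (\<Sum>k\<in>I. ?d k *\<^sub>R f k)"
      by (rule sum.mono_neutral_left) (use fin that in auto)
    moreover have "(\<Sum>k\<in>A. ?d k *\<^sub>R f k) = (\<Sum>k\<in>A. c k *\<^sub>R f k)" by simp
    ultimately have "(\<Sum>k\<in>I. ?d k *\<^sub>R f k) = 0" using that by simp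
    then have "?d i = 0" using ind[rule_format, of ?d] that by blast
    then show ?thesis using that by simp
  qed
  have qform: "b x x = (\<Sum>i\<in>A. (c i)^2 * b (f i) (f i))" if "A \<subseteq> I" "x = (\<Sum>i\<in>A. c i *\<^sub>R f i)" for A c x
    using quad_sum[OF b, of A f c] that orth finite_subset[OF _ fin] by auto
  let ?M = "{dim U | U. subspace U \<and> U \<subseteq> S \<and> (\<forall>x\<in>U. x \<noteq> 0 \<longrightarrow> b x x > 0)}"
  have ge: "card P \<in> ?M"
  proof -
    have "subspace (span (f ` P))" by simp
    moreover have "span (f ` P) \<subseteq> S" using SI P_def by (metis (no_types, lifting) image_mono mem_Collect_eq span_mono subsetI)
    moreover have "\<forall>x\<in>span (f ` P). x \<noteq> 0 \<longrightarrow> b x x > 0"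
    proof clarify
      fix x assume x: "x \<in> span (f ` P)" "x \<noteq> 0"
      obtain c where c: "x = (\<Sum>i\<in>P. c i *\<^sub>R f i)" using span_img[OF finP(1) injA x(1)] P_def by auto
      have PI: "P \<subseteq> I" by (auto simp: P_def)
      have "\<exists>i\<in>P. c i \<noteq> 0"
      proof (rule ccontr)
        assume "\<not> (\<exists>i\<in>P. c i \<noteq> 0)"
        then have "x = 0" using c by simp
        then show False using x(2) by simp
      qed
      then obtain i where i: "i \<in> P" "c i \<noteq> 0" by blast
      have "b x x = (\<Sum>i\<in>P. (c i)^2 * b (f i) (f i))" using qform[OF PI c] .
      also have "\<dots> > 0"
        apply (rule sum_pos2[OF finP(1) i(1)])
        using i by (auto simp: P_def)
      finally show "b x x > 0" .
    qed
    ultimately have "dim (span (f ` P)) \<in> ?M" by blast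
    moreover have "P \<subseteq> I" by (auto simp: P_def)
    ultimately show ?thesis using cardA[of P] by simp
  qed
  have le: "d \<le> card P" if "d \<in> ?M" for d
  proof -
    obtain U where U: "d = dim U" "subspace U" "U \<subseteq> S" "\<forall>x\<in>U. x \<noteq> 0 \<longrightarrow> b x x > 0" using \<open>d \<in> ?M\<close> by blast
    define N' where "N' = span (f ` N)"
    have NI: "N \<subseteq> I" by (auto simp: N_def)
    have "U \<inter> N' \<subseteq> {0}"
    proof
      fix x assume x: "x \<in> U \<inter> N'"
      obtain c where c: "x = (\<Sum>i\<in>N. c i *\<^sub>R f i)" using span_img[OF finP(2) injA[OF NI]] x N'_def by auto
      have "b x x = (\<Sum>i\<in>N. (c i)^2 * b (f i) (f i))" using qform[OF NI c] .
      also have "\<dots> \<le> 0" by (rule sum_nonpos) (auto simp: N_def intro!: mult_nonneg_nonpos)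
      finally have le0: "b x x \<le> 0" .
      show "x \<in> {0}"
      proof (rule ccontr)
        assume "x \<notin> {0}"
        then have "b x x > 0" using U(4) x by simp
        then show False using le0 by simp
      qed
    qed
    then have "dim (U \<inter> N') = 0" by (simp add: dim_eq_0)
    moreover have sub: "{x + y |x y. x \<in> U \<and> y \<in> N'} \<subseteq> S"
    proof -
      have "N' \<subseteq> S" using SI NI N'_def by (simp add: image_mono span_mono)
      then show ?thesis using U(3) S by (auto intro: subspace_add)
    qed
    moreover have "subspace N'" unfolding N'_def by simp
    ultimately have "dim U + dim N' \<le> dim S"
      using dim_sums_Int[OF U(2), of N'] dim_subset[OF sub] by linarith
    moreover have "dim N' = card N" using cardA[OF NI] N'_def by simp
    moreover have "card I = card P + card N"
    proof -
      have "I = P \<union> N" "P \<inter> N = {}" by (auto simp: P_def N_def)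
      then show ?thesis using card_Un_disjoint finP by metis
    qed
    ultimately show ?thesis using U(1) dimS by simp
  qed
  have finM: "finite ?M" by (rule pos_set_finite)
  have "Max ?M \<le> card P" by (rule Max.boundedI[OF finM]) (use ge le in blast)+
  moreover have "card P \<le> Max ?M" by (rule Max_ge[OF finM ge])
  ultimately show ?thesis unfolding pos_index_def P_def by simp
qed

lemma bilinear_neg: "bilinear b \<Longrightarrow> bilinear (\<lambda>x y. - b x y)"
  unfolding bilinear_def by (auto intro: linear_compose_neg)

lemma sylvester:
  fixes f :: "'i \<Rightarrow> 'a::euclidean_space"
  assumes ob: "obasis b S I f" and S: "subspace S" and b: "bilinear b"
  shows "signature (\<lambda>x. b x x) S = int (card {i\<in>I. b (f i) (f i) > 0}) - int (card {i\<in>I. b (f i) (f i) < 0})"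
proof -
  have ob': "obasis (\<lambda>x y. - b x y) S I f" using ob unfolding obasis_def by auto
  have "neg_index (\<lambda>x. b x x) S = pos_index (\<lambda>x. - b x x) S"
    unfolding neg_index_def pos_index_def by simp
  also have "\<dots> = card {i\<in>I. - b (f i) (f i) > 0}"
    using sylvester_pos[OF ob' S bilinear_neg[OF b]] by simp
  finally show ?thesis unfolding signature_def using sylvester_pos[OF ob S b] by simp
qed

lemma obasis_set:
  fixes B :: "'a::euclidean_space set"
  assumes "B \<subseteq> S" "independent B" "S \<subseteq> span B" "\<forall>x\<in>B. \<forall>y\<in>B. x \<noteq> y \<longrightarrow> b x y = 0"
  shows "obasis b S B id"
proof -
  have fin: "finite B" using assms(2) finiteI_independent by blast
  have "\<forall>c. (\<Sum>i\<in>B. c i *\<^sub>R id i) = 0 \<longrightarrow> (\<forall>i\<in>B. c i = 0)"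
    using assms(2) unfolding dependent_finite[OF fin] by auto
  then show ?thesis using assms fin unfolding obasis_def by auto
qed

lemma exists_obasis:
  fixes S :: "'a::euclidean_space set"
  assumes "subspace S" and b: "bilinear b" and sym: "\<forall>x y. b x y = b y x"
  shows "\<exists>B. obasis b S B id"
  using assms(1)
proof (induction "dim S" arbitrary: S rule: less_induct)
  case less
  show ?case
  proof (cases "\<forall>x\<in>S. b x x = 0")
    case True
    have zero: "b x y = 0" if "x \<in> S" "y \<in> S" for x y
    proof -
      have "b (x + y) (x + y) = b x x + b x y + b y x + b y y"
        by (simp add: bilinear_ladd[OF b] bilinear_radd[OF b])
      moreover have "x + y \<in> S" using that less.prems by (simp add: subspace_add)
      ultimately show ?thesis using True that sym by (metis add.left_neutral add_cancel_right_right mult_2 mult_eq_0_iff zero_neq_numeral)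
    qed
    obtain B where B: "B \<subseteq> S" "independent B" "S \<subseteq> span B" "card B = dim S" by (rule basis_exists)
    have "obasis b S B id" using B zero by (intro obasis_set) blast+
    then show ?thesis by blast
  next
    case False
    then obtain v where v: "v \<in> S" "b v v \<noteq> 0" by blast
    define S' where "S' = {x\<in>S. b v x = 0}"
    have lin: "linear (b v)" using b unfolding bilinear_def by blast
    have sS': "subspace S'" unfolding S'_def subspace_def
      using less.prems linear_add[OF lin] linear_scale[OF lin] linear_0[OF lin] by (auto simp: subspace_def)
    have "S' \<subseteq> S" "v \<notin> S'" using v by (auto simp: S'_def)
    moreover have eqs: "span S' = S'" "span S = S" using sS' less.prems by (simp_all add: span_eq_iff)
    ultimately have "span S' \<subset> span S" using v unfolding eqs by blast
    then have "dim S' < dim S" by (rule dim_psubset)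
    then obtain B' where B': "obasis b S' B' id" using less.hyps[OF _ sS'] by blast
    then have B'1: "finite B'" "B' \<subseteq> S'" "S' \<subseteq> span B'" "\<forall>x\<in>B'. \<forall>y\<in>B'. x \<noteq> y \<longrightarrow> b x y = 0"
      and indB': "independent B'"
      using indep_inj[of B' id] unfolding obasis_def by auto
    have spB': "span B' = S'" using B'1 sS' by (simp add: span_minimal subset_antisym)
    have "obasis b S (insert v B') id"
    proof (rule obasis_set)
      show "insert v B' \<subseteq> S" using v B'1 \<open>S' \<subseteq> S\<close> by auto
      show "independent (insert v B')" using indB' spB' \<open>v \<notin> S'\<close> by (simp add: independent_insert)
      show "S \<subseteq> span (insert v B')"
      proof
        fix x assume x: "x \<in> S"
        define c where "c = b v x / b v v"
        have "x - c *\<^sub>R v \<in> S'"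
          using x v less.prems linear_diff[OF lin] linear_scale[OF lin]
          by (auto simp: S'_def c_def subspace_diff subspace_scale)
        then have "x - c *\<^sub>R v \<in> span (insert v B')" using spB' by (metis span_mono subset_insertI subsetD)
        moreover have "c *\<^sub>R v \<in> span (insert v B')" by (simp add: span_base span_scale)
        ultimately have "(x - c *\<^sub>R v) + c *\<^sub>R v \<in> span (insert v B')" by (rule span_add)
        then show "x \<in> span (insert v B')" by simp
      qed
      show "\<forall>x\<in>insert v B'. \<forall>y\<in>insert v B'. x \<noteq> y \<longrightarrow> b x y = 0"
        using B'1 sym by (auto simp: S'_def)
    qed
    then show ?thesis by blast
  qed
qed


definition polar3 :: "('v \<Rightarrow> 'v \<Rightarrow> real) \<Rightarrow> ('v \<times> 'v \<times> 'v) \<Rightarrow> ('v \<times> 'v \<times> 'v) \<Rightarrow> real" where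
 "polar3 h x y = (h (fst x) (fst (snd y)) + h (fst y) (fst (snd x)) + h (fst (snd x)) (snd (snd y))
    + h (fst (snd y)) (snd (snd x)) + h (snd (snd x)) (fst y) + h (snd (snd y)) (fst x)) / 2"

lemma polar3_diag: "(\<lambda>x. polar3 h x x) = (\<lambda>(x1, x2, x3). h x1 x2 + h x2 x3 + h x3 x1)"
  by (auto simp: polar3_def fun_eq_iff)

lemma polar3_sym: "polar3 h x y = polar3 h y x"
  by (simp add: polar3_def algebra_simps)

lemma polar3_bilinear:
  fixes h :: "'v::real_vector \<Rightarrow> 'v \<Rightarrow> real"
  assumes b: "bilinear h" shows "bilinear (polar3 h)"
  unfolding bilinear_def
  by (auto intro!: linearI simp: polar3_def bilinear_ladd[OF b] bilinear_radd[OF b]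
      bilinear_lmul[OF b] bilinear_rmul[OF b] algebra_simps add_divide_distrib)

lemma omegaK_bilinear: "bilinear (omega_K \<omega> K)"
  unfolding bilinear_def omega_K_def
  by (auto intro!: linearI simp: algebra_simps sum.distrib sum_distrib_left)

lemma sum_UNIV_prod: "(\<Sum>p\<in>(UNIV::('a::finite\<times>'b::finite) set). f p) = (\<Sum>i\<in>UNIV. \<Sum>k\<in>UNIV. f (i,k))"
  using sum.cartesian_product[of "\<lambda>i k. f (i,k)" UNIV UNIV] by (simp add: case_prod_eta)

lemma bil_expand:
  fixes h :: "real^'m \<Rightarrow> real^'m \<Rightarrow> real"
  assumes b: "bilinear h"
  shows "h x y = (\<Sum>i\<in>UNIV. \<Sum>j\<in>UNIV. x$i * y$j * h (axis i 1) (axis j 1))"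
proof -
  have ex: "z = (\<Sum>i\<in>UNIV. z$i *\<^sub>R axis i 1)" for z :: "real^'m"
    using basis_expansion[of z] by (simp add: scalar_mult_eq_scaleR)
  have "h x y = h (\<Sum>i\<in>UNIV. x$i *\<^sub>R axis i 1) (\<Sum>j\<in>UNIV. y$j *\<^sub>R axis j 1)"
    using ex[of x] ex[of y] by simp
  also have "\<dots> = (\<Sum>(i,j)\<in>UNIV\<times>UNIV. h (x$i *\<^sub>R axis i 1) (y$j *\<^sub>R axis j 1))"
    by (rule bilinear_sum[OF b])
  also have "\<dots> = (\<Sum>i\<in>UNIV. \<Sum>j\<in>UNIV. h (x$i *\<^sub>R axis i 1) (y$j *\<^sub>R axis j 1))"
    by (rule sum.cartesian_product[symmetric])
  also have "\<dots> = (\<Sum>i\<in>UNIV. \<Sum>j\<in>UNIV. x$i * y$j * h (axis i 1) (axis j 1))"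
    by (simp add: bilinear_lmul[OF b] bilinear_rmul[OF b] mult_ac)
  finally show ?thesis .
qed

lemma omegaK_tprod:
  fixes \<omega> :: "real^'m \<Rightarrow> real^'m \<Rightarrow> real" and K :: "real^'n \<Rightarrow> real^'n \<Rightarrow> real"
  assumes "bilinear \<omega>" "bilinear K"
  shows "omega_K \<omega> K (tprod a s) (tprod a' t) = \<omega> a a' * K s t"
proof -
  let ?W = "\<lambda>i j. \<omega> (axis i 1) (axis j 1)" and ?K = "\<lambda>k l. K (axis k 1) (axis l 1)"
  have "omega_K \<omega> K (tprod a s) (tprod a' t) =
     (\<Sum>p\<in>UNIV. \<Sum>q\<in>UNIV. ?W (fst p) (fst q) * ?K (snd p) (snd q) * (a$fst p * s$snd p) * (a'$fst q * t$snd q))"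
    by (simp add: omega_K_def tprod_def)
  also have "\<dots> = (\<Sum>i\<in>UNIV. \<Sum>k\<in>UNIV. \<Sum>j\<in>UNIV. \<Sum>l\<in>UNIV. ?W i j * ?K k l * (a$i * s$k) * (a'$j * t$l))"
    by (simp add: sum_UNIV_prod)
  also have "\<dots> = (\<Sum>i\<in>UNIV. \<Sum>j\<in>UNIV. \<Sum>k\<in>UNIV. \<Sum>l\<in>UNIV. ?W i j * ?K k l * (a$i * s$k) * (a'$j * t$l))"
    by (rule sum.cong[OF refl], rule sum.swap)
  also have "\<dots> = (\<Sum>i\<in>UNIV. \<Sum>j\<in>UNIV. \<Sum>k\<in>UNIV. \<Sum>l\<in>UNIV. (a$i * a'$j * ?W i j) * (s$k * t$l * ?K k l))"
    by (simp add: mult_ac)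
  also have "\<dots> = (\<Sum>i\<in>UNIV. \<Sum>j\<in>UNIV. (a$i * a'$j * ?W i j) * (\<Sum>k\<in>UNIV. \<Sum>l\<in>UNIV. s$k * t$l * ?K k l))"
    by (simp only: sum_distrib_left)
  also have "\<dots> = (\<Sum>i\<in>UNIV. \<Sum>j\<in>UNIV. a$i * a'$j * ?W i j) * (\<Sum>k\<in>UNIV. \<Sum>l\<in>UNIV. s$k * t$l * ?K k l)"
    by (simp only: sum_distrib_right)
  also have "\<dots> = \<omega> a a' * K s t"
    using bil_expand[OF assms(1), of a a'] bil_expand[OF assms(2), of s t] by simp
  finally show ?thesis .
qed

lemma tprod_add1: "tprod (x + y) t = tprod x t + tprod y t"
  by (simp add: tprod_def vec_eq_iff algebra_simps)
lemma tprod_scale1: "tprod (c *\<^sub>R x) t = c *\<^sub>R tprod x t"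
  by (simp add: tprod_def vec_eq_iff algebra_simps)
lemma tprod_add2: "tprod x (s + t) = tprod x s + tprod x t"
  by (simp add: tprod_def vec_eq_iff algebra_simps)
lemma tprod_scale2: "tprod x (c *\<^sub>R t) = c *\<^sub>R tprod x t"
  by (simp add: tprod_def vec_eq_iff algebra_simps)
lemma tprod_zero1[simp]: "tprod 0 t = 0"
  by (simp add: tprod_def vec_eq_iff)

definition Tv :: "((real^'m) \<times> (real^'m) \<times> (real^'m)) \<Rightarrow> real^'n \<Rightarrow> ((real^('m\<times>'n)) \<times> (real^('m\<times>'n)) \<times> (real^('m\<times>'n)))" where
  "Tv u e = (tprod (fst u) e, tprod (fst (snd u)) e, tprod (snd (snd u)) e)"

lemma Tv_linear1: "linear (\<lambda>u. Tv u t)"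
  by (rule linearI) (auto simp: Tv_def tprod_add1 tprod_scale1)
lemma Tv_linear2: "linear (\<lambda>t. Tv u t)"
  by (rule linearI) (auto simp: Tv_def tprod_add2 tprod_scale2)

lemma polar3_Tv:
  fixes \<omega> :: "real^'m \<Rightarrow> real^'m \<Rightarrow> real" and K :: "real^'n \<Rightarrow> real^'n \<Rightarrow> real"
  assumes "bilinear \<omega>" "bilinear K" "\<forall>x y. K x y = K y x"
  shows "polar3 (omega_K \<omega> K) (Tv u e) (Tv u' e') = polar3 \<omega> u u' * K e e'"
  using assms(3) by (simp add: polar3_def Tv_def omegaK_tprod[OF assms(1,2)] algebra_simps add_divide_distrib)

lemma tensor_indep:
  fixes g :: "'x \<Rightarrow> real^'m" and E :: "(real^'n) set"
  assumes finA: "finite A" and finE: "finite E"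
    and indE: "\<forall>d. (\<Sum>e\<in>E. d e *\<^sub>R e) = 0 \<longrightarrow> (\<forall>e\<in>E. d e = 0)"
    and z: "(\<Sum>(a,e)\<in>A\<times>E. c (a,e) *\<^sub>R tprod (g a) e) = 0"
    and e: "e \<in> E"
  shows "(\<Sum>a\<in>A. c (a,e) *\<^sub>R g a) = 0"
proof -
  have comp: "(\<Sum>e\<in>E. (\<Sum>a\<in>A. c (a,e) * g a $ p) *\<^sub>R e) = 0" for p
  proof -
    have "(\<Sum>e\<in>E. (\<Sum>a\<in>A. c (a,e) * g a $ p) *\<^sub>R e) $ r = (\<Sum>(a,e)\<in>A\<times>E. c (a,e) *\<^sub>R tprod (g a) e) $ (p, r)" for r
    proof -
      have "(\<Sum>e\<in>E. (\<Sum>a\<in>A. c (a,e) * g a $ p) *\<^sub>R e) $ r = (\<Sum>e\<in>E. \<Sum>a\<in>A. c (a,e) * g a $ p * e $ r)"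
        by (simp add: sum_component sum_distrib_right)
      also have "\<dots> = (\<Sum>a\<in>A. \<Sum>e\<in>E. c (a,e) * g a $ p * e $ r)" by (rule sum.swap)
      also have "\<dots> = (\<Sum>(a,e)\<in>A\<times>E. c (a,e) *\<^sub>R tprod (g a) e) $ (p, r)"
        by (simp add: sum_component sum.cartesian_product tprod_def case_prod_beta mult_ac)
      finally show ?thesis .
    qed
    then show ?thesis using z by (simp add: vec_eq_iff)
  qed
  show ?thesis
  proof (subst vec_eq_iff, intro allI)
    fix p
    have "(\<Sum>a\<in>A. c (a,e) * g a $ p) = 0" using indE[rule_format, OF comp[of p]] e by blast
    then show "(\<Sum>a\<in>A. c (a,e) *\<^sub>R g a) $ p = 0 $ p" by (simp add: sum_component)
  qed
qed

lemma count_prod: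
  fixes \<alpha> :: "'a \<Rightarrow> real" and \<beta> :: "'b \<Rightarrow> real"
  assumes "finite A" "finite B"
  shows "int (card {x\<in>A\<times>B. \<alpha> (fst x) * \<beta> (snd x) > 0}) - int (card {x\<in>A\<times>B. \<alpha> (fst x) * \<beta> (snd x) < 0})
    = (int (card {a\<in>A. \<alpha> a > 0}) - int (card {a\<in>A. \<alpha> a < 0})) * (int (card {b\<in>B. \<beta> b > 0}) - int (card {b\<in>B. \<beta> b < 0}))"
proof -
  let ?Ap = "{a\<in>A. \<alpha> a > 0}" and ?An = "{a\<in>A. \<alpha> a < 0}" and ?Bp = "{b\<in>B. \<beta> b > 0}" and ?Bn = "{b\<in>B. \<beta> b < 0}"
  have fins: "finite ?Ap" "finite ?An" "finite ?Bp" "finite ?Bn" using assms by auto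
  have e1: "{x\<in>A\<times>B. \<alpha> (fst x) * \<beta> (snd x) > 0} = ?Ap \<times> ?Bp \<union> ?An \<times> ?Bn"
    by (auto simp: zero_less_mult_iff)
  have e2: "{x\<in>A\<times>B. \<alpha> (fst x) * \<beta> (snd x) < 0} = ?Ap \<times> ?Bn \<union> ?An \<times> ?Bp"
    by (auto simp: mult_less_0_iff)
  have c1: "card (?Ap \<times> ?Bp \<union> ?An \<times> ?Bn) = card ?Ap * card ?Bp + card ?An * card ?Bn"
    by (subst card_Un_disjoint) (use fins in \<open>auto simp: card_cartesian_product\<close>)
  have c2: "card (?Ap \<times> ?Bn \<union> ?An \<times> ?Bp) = card ?Ap * card ?Bn + card ?An * card ?Bp"
    by (subst card_Un_disjoint) (use fins in \<open>auto simp: card_cartesian_product\<close>)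
  show ?thesis unfolding e1 e2 c1 c2 by (simp add: algebra_simps)
qed


theorem lemma2p19:
  fixes V :: "(real^'m) set" and \<omega> :: "real^'m \<Rightarrow> real^'m \<Rightarrow> real"
    and K :: "real^'n \<Rightarrow> real^'n \<Rightarrow> real"
    and L1 L2 L3 :: "(real^'m) set"
  assumes "symplectic_on V \<omega>"
    and "even_integral_form K"
    and "lagrangian V \<omega> L1" and "lagrangian V \<omega> L2" and "lagrangian V \<omega> L3"
  shows "maslov_kashiwara (omega_K \<omega> K) (tensor_t L1 :: (real^('m \<times> 'n)) set) (tensor_t L2) (tensor_t L3)
           = signature (\<lambda>t. K t t) UNIV * maslov_kashiwara \<omega> L1 L2 L3"
proof -
  have bw: "bilinear \<omega>" using assms(1) by (simp add: symplectic_on_def)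
  have bK: "bilinear K" and symK: "\<forall>x y. K x y = K y x" using assms(2) by (auto simp: even_integral_form_def)
  have sL: "subspace L1" "subspace L2" "subspace L3" using assms(3-5) by (auto simp: lagrangian_def)
  define L where "L = L1 \<times> L2 \<times> L3"
  define T where "T = (tensor_t L1 :: (real^('m \<times> 'n)) set) \<times> (tensor_t L2 :: (real^('m \<times> 'n)) set) \<times> (tensor_t L3 :: (real^('m \<times> 'n)) set)"
  have sLL: "subspace L" unfolding L_def using sL by (simp add: subspace_Times)
  have sT: "subspace T" unfolding T_def tensor_t_def by (simp add: subspace_Times)
  obtain B where B: "obasis (polar3 \<omega>) L B id"
    using exists_obasis[OF sLL polar3_bilinear[OF bw]] polar3_sym by blast
  obtain E where E: "obasis K (UNIV :: (real^'n) set) E id"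
    using exists_obasis[OF subspace_UNIV bK symK] by blast
  have finB: "finite B" and BL: "B \<subseteq> L" and indB: "\<forall>c. (\<Sum>i\<in>B. c i *\<^sub>R i) = 0 \<longrightarrow> (\<forall>i\<in>B. c i = 0)"
    and spB: "L \<subseteq> span B" and orthB: "\<forall>i\<in>B. \<forall>j\<in>B. i \<noteq> j \<longrightarrow> polar3 \<omega> i j = 0"
    using B unfolding obasis_def by auto
  have finE: "finite E" and indE: "\<forall>c. (\<Sum>i\<in>E. c i *\<^sub>R i) = 0 \<longrightarrow> (\<forall>i\<in>E. c i = 0)"
    and spE: "UNIV \<subseteq> span E" and orthE: "\<forall>i\<in>E. \<forall>j\<in>E. i \<noteq> j \<longrightarrow> K i j = 0"
    using E unfolding obasis_def by auto
  define f where "f = (\<lambda>p. Tv (fst p) (snd p) :: (real^('m \<times> 'n)) \<times> (real^('m \<times> 'n)) \<times> (real^('m \<times> 'n)))"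
  have obT: "obasis (polar3 (omega_K \<omega> K)) T (B \<times> E) f"
    unfolding obasis_def
  proof (intro conjI)
    show "finite (B \<times> E)" using finB finE by simp
    show "f ` (B \<times> E) \<subseteq> T"
      using BL unfolding T_def L_def f_def Tv_def tensor_t_def by (force intro: span_base)
    show "\<forall>i\<in>B \<times> E. \<forall>j\<in>B \<times> E. i \<noteq> j \<longrightarrow> polar3 (omega_K \<omega> K) (f i) (f j) = 0"
      using orthB orthE by (auto simp: f_def polar3_Tv[OF bw bK symK])
    show "\<forall>c. (\<Sum>i\<in>B \<times> E. c i *\<^sub>R f i) = 0 \<longrightarrow> (\<forall>i\<in>B \<times> E. c i = 0)"
    proof (intro allI impI ballI)
      fix c p assume z: "(\<Sum>i\<in>B \<times> E. c i *\<^sub>R f i) = 0" and p: "p \<in> B \<times> E"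
      have z1: "(\<Sum>(u,e)\<in>B\<times>E. c (u,e) *\<^sub>R tprod (fst u) e) = 0"
        using arg_cong[OF z, of fst] by (simp add: fst_sum f_def Tv_def case_prod_beta)
      have z2: "(\<Sum>(u,e)\<in>B\<times>E. c (u,e) *\<^sub>R tprod (fst (snd u)) e) = 0"
        using arg_cong[OF z, of "\<lambda>x. fst (snd x)"] by (simp add: fst_sum snd_sum f_def Tv_def case_prod_beta)
      have z3: "(\<Sum>(u,e)\<in>B\<times>E. c (u,e) *\<^sub>R tprod (snd (snd u)) e) = 0"
        using arg_cong[OF z, of "\<lambda>x. snd (snd x)"] by (simp add: snd_sum f_def Tv_def case_prod_beta)
      obtain u e where ue: "p = (u, e)" "u \<in> B" "e \<in> E" using p by auto
      have "(\<Sum>a\<in>B. c (a,e) *\<^sub>R a) = 0"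
        using tensor_indep[OF finB finE indE z1 ue(3)] tensor_indep[OF finB finE indE z2 ue(3)]
          tensor_indep[OF finB finE indE z3 ue(3)]
        by (simp add: prod_eq_iff fst_sum snd_sum)
      then show "c p = 0" using indB[rule_format, of "\<lambda>a. c (a, e)"] ue by auto
    qed
    show "T \<subseteq> span (f ` (B \<times> E))"
    proof -
      let ?W = "span (f ` (B \<times> E))"
      have sW: "subspace ?W" by simp
      have inW: "Tv u t \<in> ?W" if u: "u \<in> L" for u t
      proof -
        have a: "Tv b t \<in> ?W" if b: "b \<in> B" for b
        proof -
          have "t \<in> span E" using spE by auto
          then have "Tv b t \<in> (\<lambda>t. Tv b t) ` span E" by blast
          also have "\<dots> = span ((\<lambda>t. Tv b t) ` E)" by (rule span_linear_image[OF Tv_linear2, symmetric])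
          also have "\<dots> \<subseteq> ?W"
          proof (rule span_mono, rule image_subsetI)
            fix e assume "e \<in> E"
            then show "Tv b e \<in> f ` (B \<times> E)" using b by (intro image_eqI[of _ _ "(b, e)"]) (auto simp: f_def)
          qed
          finally show ?thesis .
        qed
        have "Tv u t \<in> (\<lambda>u. Tv u t) ` span B" using u spB by blast
        also have "\<dots> = span ((\<lambda>u. Tv u t) ` B)" by (rule span_linear_image[OF Tv_linear1, symmetric])
        also have "\<dots> \<subseteq> ?W" by (rule span_minimal) (use a in auto)
        finally show ?thesis .
      qed
      have emb: "(\<lambda>y. g y) ` span {tprod a t | a t. a \<in> Li} \<subseteq> ?W"
        if lin: "linear g" and gi: "\<And>a t. a \<in> Li \<Longrightarrow> g (tprod a t) \<in> ?W" for g Li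
      proof -
        have "g ` span {tprod a t | a t. a \<in> Li} = span (g ` {tprod a t | a t. a \<in> Li})"
          by (rule span_linear_image[OF lin, symmetric])
        also have "\<dots> \<subseteq> ?W" by (rule span_minimal) (use gi in auto)
        finally show ?thesis by simp
      qed
      have l1: "linear (\<lambda>y::real^('m\<times>'n). (y, 0::real^('m\<times>'n), 0::real^('m\<times>'n)))" by (rule linearI) auto
      have l2: "linear (\<lambda>y::real^('m\<times>'n). (0::real^('m\<times>'n), y, 0::real^('m\<times>'n)))" by (rule linearI) auto
      have l3: "linear (\<lambda>y::real^('m\<times>'n). (0::real^('m\<times>'n), 0::real^('m\<times>'n), y))" by (rule linearI) auto
      have e1: "(\<lambda>y. (y, 0, 0)) ` tensor_t L1 \<subseteq> ?W" unfolding tensor_t_def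
      proof (rule emb[OF l1])
        fix a t assume "a \<in> L1"
        then have "Tv (a, 0, 0) t \<in> ?W" using inW sL by (simp add: L_def subspace_0)
        then show "(tprod a t, 0, 0) \<in> ?W" by (simp add: Tv_def)
      qed
      have e2: "(\<lambda>y. (0, y, 0)) ` tensor_t L2 \<subseteq> ?W" unfolding tensor_t_def
      proof (rule emb[OF l2])
        fix a t assume "a \<in> L2"
        then have "Tv (0, a, 0) t \<in> ?W" using inW sL by (simp add: L_def subspace_0)
        then show "(0, tprod a t, 0) \<in> ?W" by (simp add: Tv_def)
      qed
      have e3: "(\<lambda>y. (0, 0, y)) ` tensor_t L3 \<subseteq> ?W" unfolding tensor_t_def
      proof (rule emb[OF l3])
        fix a t assume "a \<in> L3"
        then have "Tv (0, 0, a) t \<in> ?W" using inW sL by (simp add: L_def subspace_0)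
        then show "(0, 0, tprod a t) \<in> ?W" by (simp add: Tv_def)
      qed
      show ?thesis
      proof
        fix X assume "X \<in> T"
        then obtain X1 X2 X3 where X: "X = (X1, X2, X3)" "X1 \<in> tensor_t L1" "X2 \<in> tensor_t L2" "X3 \<in> tensor_t L3"
          unfolding T_def by auto
        have "(X1, 0, 0) \<in> ?W" "(0, X2, 0) \<in> ?W" "(0, 0, X3) \<in> ?W" using e1 e2 e3 X by auto
        then have "(X1, 0, 0) + (0, X2, 0) + (0, 0, X3) \<in> ?W" by (intro span_add)
        then show "X \<in> ?W" using X by simp
      qed
    qed
  qed
  have MKK: "maslov_kashiwara (omega_K \<omega> K) (tensor_t L1 :: (real^('m \<times> 'n)) set) (tensor_t L2) (tensor_t L3)
     = int (card {p\<in>B\<times>E. polar3 \<omega> (fst p) (fst p) * K (snd p) (snd p) > 0})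
       - int (card {p\<in>B\<times>E. polar3 \<omega> (fst p) (fst p) * K (snd p) (snd p) < 0})"
    unfolding maslov_kashiwara_def polar3_diag[symmetric] T_def[symmetric]
    using sylvester[OF obT sT polar3_bilinear[OF omegaK_bilinear]] by (simp add: f_def polar3_Tv[OF bw bK symK])
  have MK: "maslov_kashiwara \<omega> L1 L2 L3 = int (card {u\<in>B. polar3 \<omega> u u > 0}) - int (card {u\<in>B. polar3 \<omega> u u < 0})"
    unfolding maslov_kashiwara_def polar3_diag[symmetric] L_def[symmetric]
    using sylvester[OF B sLL polar3_bilinear[OF bw]] by simp
  have SK: "signature (\<lambda>t. K t t) UNIV = int (card {e\<in>E. K e e > 0}) - int (card {e\<in>E. K e e < 0})"
    using sylvester[OF E subspace_UNIV bK] by simp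
  show ?thesis unfolding MKK MK SK
    using count_prod[OF finB finE, of "\<lambda>u. polar3 \<omega> u u" "\<lambda>e. K e e"] by (simp add: mult.commute)
qed

end
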